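(* Assume $CA_2$. Then there is a Suslin $\omega_1$-pretower, i.e. an $\omega_1$-pretower $\mathcal T$ on a countable set such that every uncountable $\mathcal A\subseteq\mathcal T$ contains distinct $A,B$ with $A\subseteq B$.
   Context: An $\omega_1$-pretower on a countably infinite set $X$ is a family $\mathcal T\subseteq[X]^\omega$ well ordered by $\subsetneq^*$ (where $A\subsetneq^*B$ means $A\setminus B$ is finite and $B\setminus A$ is infinite) with order type $\omega_1$. A type is a sequence $\tau=\{(m_k,n_{k+1},r_{k+1})\}_{k\in\omega}$ of natural numbers with $m_0=1$; $n_k\ge2$ for $k\ge1$; every $r\in\omega$ equals $r_k$ for infinitely many $k$; $m_k>r_{k+1}$; and $m_{k+1}=r_{k+1}+(m_k-r_{k+1})n_{k+1}$ for all $k$. For a set of ordinals $X$ and $\mathcal F\subseteq[X]^{<\omega}$, $\mathcal F_k$ is the set of elements of rank $k$ in $(\mathcal F,\subsetneq)$; $A\sqsubseteq B$ means $A\subseteq B$ and every element of $B$ below an element of $A$ is in $A$; $A<B$ means every element of $A$ is below every element of $B$. $\mathcal F$ is a construction scheme over $X$ of type $\tau$ if (1) every finite subset of $X$ lies in a member of $\mathcal F$; (2) $|F|=m_k$ for $F\in\mathcal F_k$; (3) $E\cap F\sqsubseteq E,F$ for $E,F\in\mathcal F_k$; (4) each $F\in\mathcal F_{k+1}$ is the union of uniquely determined $F_0,\dots,F_{n_{k+1}-1}\in\mathcal F_k$ forming a $\Delta$-system with root $R(F)$, $|R(F)|=r_{k+1}$, $R(F)<F_0\setminus R(F)<\dots<F_{n_{k+1}-1}\setminus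 R(F)$. For a construction scheme $\mathcal F$ over $\omega_1$, $l\ge1$, $F\in\mathcal F_l$ and finite $\mathcal C\subseteq[\omega_1]^{<\omega}$: $F$ captures $\mathcal C$ if $|\mathcal C|\le n_l$ and $\mathcal C$ can be enumerated as $\{c_i\}_{i<|\mathcal C|}$ with $c_i\subseteq F_i$, $c_i\setminus R(F)\neq\emptyset$ and $\phi_i[c_0]=c_i$ where $\phi_i:F_0\to F_i$ is the increasing bijection. $\mathcal F$ is $n$-capturing if for every uncountable $S\subseteq[\omega_1]^{<\omega}$ and every $k\in\omega$ there are $\mathcal C\in[S]^n$, $l>k$ and $F\in\mathcal F_l$ capturing $\mathcal C$. $CA_n$ is the statement: for every type $\tau$ with $n\le n_k$ for all $k\ge1$ there is an $n$-capturing construction scheme over $\omega_1$ of type $\tau$. *)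

theory Defs
  imports "HOL-Library.Countable_Set"
begin

text \<open>A well-ordered type is (order-isomorphic to) omega_1 iff it is uncountable
  and every proper initial segment is countable.\<close>
definition omega1_type :: "'a::wellorder itself \<Rightarrow> bool" where
  "omega1_type _ \<longleftrightarrow> \<not> countable (UNIV :: 'a set) \<and> (\<forall>x::'a. countable {y. y < x})"

definition almost_psubset :: "'b set \<Rightarrow> 'b set \<Rightarrow> bool" where
  "almost_psubset A B \<longleftrightarrow> finite (A - B) \<and> infinite (B - A)"

text \<open>An omega_1-pretower on the countably infinite set nat: a family of infinite
  subsets, well ordered by almost_psubset with order type omega_1 (here: order-isomorphic
  to the omega_1 type 'a).\<close>
definition omega1_pretower :: "'a::wellorder itself \<Rightarrow> nat set set \<Rightarrow> bool" where
  "omega1_pretower _ T \<longleftrightarrow> (\<forall>A\<in>T. infinite A) \<and>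
     (\<exists>f :: 'a \<Rightarrow> nat set. bij_betw f UNIV T \<and> (\<forall>x y. x < y \<longleftrightarrow> almost_psubset (f x) (f y)))"

definition suslin_family :: "nat set set \<Rightarrow> bool" where
  "suslin_family T \<longleftrightarrow> (\<forall>\<A>\<subseteq>T. \<not> countable \<A> \<longrightarrow> (\<exists>A\<in>\<A>. \<exists>B\<in>\<A>. A \<noteq> B \<and> A \<subseteq> B))"

text \<open>A type tau = ((m k, n (k+1), r (k+1)))_k is given by three sequences m, n, r;
  the values n 0 and r 0 are irrelevant.\<close>
definition is_type :: "(nat \<Rightarrow> nat) \<Rightarrow> (nat \<Rightarrow> nat) \<Rightarrow> (nat \<Rightarrow> nat) \<Rightarrow> bool" where
  "is_type m n r \<longleftrightarrow> m 0 = 1 \<and> (\<forall>k\<ge>1. n k \<ge> 2) \<and>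
     (\<forall>x. infinite {k. k \<ge> 1 \<and> r k = x}) \<and>
     (\<forall>k. m k > r (Suc k)) \<and>
     (\<forall>k. m (Suc k) = r (Suc k) + (m k - r (Suc k)) * n (Suc k))"

definition set_less :: "'a::linorder set \<Rightarrow> 'a set \<Rightarrow> bool" (infix "<\<^sub>s" 50) where
  "A <\<^sub>s B \<longleftrightarrow> (\<forall>a\<in>A. \<forall>b\<in>B. a < b)"

definition initial_sub :: "'a::linorder set \<Rightarrow> 'a set \<Rightarrow> bool" (infix "\<sqsubseteq>" 50) where
  "A \<sqsubseteq> B \<longleftrightarrow> A \<subseteq> B \<and> (\<forall>b\<in>B. \<forall>a\<in>A. b < a \<longrightarrow> b \<in> A)"

text \<open>Rank of A in the poset (F, proper subset): the length of a longest strictly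
  increasing chain in F ending at A (all members are finite, so this is a natural number
  and agrees with the usual recursive rank).\<close>
definition rank_in :: "'a set set \<Rightarrow> 'a set \<Rightarrow> nat" where
  "rank_in F A = (GREATEST k. \<exists>c :: nat \<Rightarrow> 'a set.
      (\<forall>i\<le>k. c i \<in> F) \<and> (\<forall>i<k. c i \<subset> c (Suc i)) \<and> c k = A)"

definition level :: "'a set set \<Rightarrow> nat \<Rightarrow> 'a set set" where
  "level F k = {A \<in> F. rank_in F A = k}"

definition decomposition ::
  "'a::linorder set set \<Rightarrow> nat \<Rightarrow> nat \<Rightarrow> nat \<Rightarrow> 'a set \<Rightarrow> (nat \<Rightarrow> 'a set) \<Rightarrow> 'a set \<Rightarrow> bool" where
  "decomposition F k N rr E Fs R \<longleftrightarrow>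
     (\<forall>i<N. Fs i \<in> level F k) \<and> E = (\<Union>i<N. Fs i) \<and>
     (\<forall>i<N. \<forall>j<N. i \<noteq> j \<longrightarrow> Fs i \<inter> Fs j = R) \<and> card R = rr \<and>
     R <\<^sub>s (Fs 0 - R) \<and> (\<forall>i. Suc i < N \<longrightarrow> (Fs i - R) <\<^sub>s (Fs (Suc i) - R))"

definition construction_scheme ::
  "'a::linorder set set \<Rightarrow> (nat \<Rightarrow> nat) \<Rightarrow> (nat \<Rightarrow> nat) \<Rightarrow> (nat \<Rightarrow> nat) \<Rightarrow> bool" where
  "construction_scheme F m n r \<longleftrightarrow>
     (\<forall>A\<in>F. finite A) \<and>
     (\<forall>A. finite A \<longrightarrow> (\<exists>E\<in>F. A \<subseteq> E)) \<and>
     (\<forall>k. \<forall>E\<in>level F k. card E = m k) \<and>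
     (\<forall>k. \<forall>E\<in>level F k. \<forall>E'\<in>level F k. E \<inter> E' \<sqsubseteq> E \<and> E \<inter> E' \<sqsubseteq> E') \<and>
     (\<forall>k. \<forall>E\<in>level F (Suc k).
        \<exists>Fs. (\<exists>R. decomposition F k (n (Suc k)) (r (Suc k)) E Fs R) \<and>
          (\<forall>Gs. (\<exists>R. decomposition F k (n (Suc k)) (r (Suc k)) E Gs R) \<longrightarrow>
                (\<forall>i<n (Suc k). Gs i = Fs i)))"

text \<open>The decomposition of E is
  unique, so quantifying existentially over it is the same as using the canonical one;
  likewise the increasing bijection Fs 0 \<rightarrow> Fs i is unique.\<close>
definition captures ::
  "'a::linorder set set \<Rightarrow> (nat \<Rightarrow> nat) \<Rightarrow> (nat \<Rightarrow> nat) \<Rightarrow> nat \<Rightarrow> 'a set \<Rightarrow> 'a set set \<Rightarrow> bool" where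
  "captures F n r l E C \<longleftrightarrow> l \<ge> 1 \<and> E \<in> level F l \<and> finite C \<and> card C \<le> n l \<and>
     (\<exists>Fs R. decomposition F (l - 1) (n l) (r l) E Fs R \<and>
       (\<exists>c :: nat \<Rightarrow> 'a set. bij_betw c {..<card C} C \<and>
          (\<forall>i<card C. c i \<subseteq> Fs i \<and> c i - R \<noteq> {} \<and>
             (\<exists>\<phi>. bij_betw \<phi> (Fs 0) (Fs i) \<and> strict_mono_on (Fs 0) \<phi> \<and> \<phi> ` (c 0) = c i))))"

definition n_capturing ::
  "nat \<Rightarrow> 'a::linorder set set \<Rightarrow> (nat \<Rightarrow> nat) \<Rightarrow> (nat \<Rightarrow> nat) \<Rightarrow> bool" where
  "n_capturing N F n r \<longleftrightarrow>
     (\<forall>S. (\<forall>s\<in>S. finite s) \<longrightarrow> \<not> countable S \<longrightarrow>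
        (\<forall>k. \<exists>C\<subseteq>S. finite C \<and> card C = N \<and> (\<exists>l>k. \<exists>E\<in>level F l. captures F n r l E C)))"

definition CA :: "'a::wellorder itself \<Rightarrow> nat \<Rightarrow> bool" where
  "CA _ N \<longleftrightarrow> (\<forall>m n r. is_type m n r \<longrightarrow> (\<forall>k\<ge>1. N \<le> n k) \<longrightarrow>
       (\<exists>F :: 'a set set. construction_scheme F m n r \<and> n_capturing N F n r))"

end

theory Submission
  imports Defs
begin

lemma iseg_union: "A \<sqsubseteq> G \<Longrightarrow> B \<sqsubseteq> G \<Longrightarrow> (A \<union> B) \<sqsubseteq> G"
  unfolding initial_sub_def by blast

lemma iseg_unique:
  assumes "A \<sqsubseteq> H" "B \<sqsubseteq> H" "finite H" "card A = card B"
  shows "A = B"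
proof (rule ccontr)
  assume ne: "A \<noteq> B"
  have fA: "finite A" "finite B" using assms unfolding initial_sub_def by (auto intro: finite_subset)
  { fix A B :: "'a set" and x
    assume a: "A \<sqsubseteq> H" "B \<sqsubseteq> H" "finite A" "card A = card B" and x: "x \<in> A" "x \<notin> B"
    have "B \<subseteq> A"
    proof
      fix b assume b: "b \<in> B"
      have "b \<noteq> x" using x b by auto
      moreover have "\<not> x < b" using a(2) b x a(1) unfolding initial_sub_def by blast
      ultimately have "b < x" by auto
      then show "b \<in> A" using a(1) b x a(2) unfolding initial_sub_def by blast
    qed
    then have "B \<subset> A" using x by auto
    then have "card B < card A" using a(3) by (simp add: psubset_card_mono)
    then have False using a(4) by simp }
  note * = this
  from ne obtain x where "x \<in> A \<and> x \<notin> B \<or> x \<in> B \<and> x \<notin> A" by blast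
  then show False using *[of A B x] *[of B A x] assms fA by auto
qed

lemma iseg_image:
  fixes \<psi> :: "'a::linorder \<Rightarrow> 'b::linorder"
  assumes "A \<sqsubseteq> H" "strict_mono_on H \<psi>"
  shows "\<psi> ` A \<sqsubseteq> \<psi> ` H"
  unfolding initial_sub_def
proof safe
  show "\<psi> a \<in> \<psi> ` H" if "a \<in> A" for a using assms(1) that unfolding initial_sub_def by auto
next
  fix y a assume y: "y \<in> H" and a: "a \<in> A" and lt: "\<psi> y < \<psi> a"
  have aH: "a \<in> H" using assms(1) a unfolding initial_sub_def by auto
  have "y < a"
  proof (rule ccontr)
    assume "\<not> y < a"
    then have "a < y \<or> a = y" by auto
    then show False using strict_mono_onD[OF assms(2) aH y] lt by auto
  qed
  then have "y \<in> A" using assms(1) y a unfolding initial_sub_def by blast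
  then show "\<psi> y \<in> \<psi> ` A" by auto
qed

lemma dec2:
  "decomposition F k 2 rr E Fs R \<longleftrightarrow>
    Fs 0 \<in> level F k \<and> Fs 1 \<in> level F k \<and> E = Fs 0 \<union> Fs 1 \<and> Fs 0 \<inter> Fs 1 = R \<and>
    card R = rr \<and> R <\<^sub>s (Fs 0 - R) \<and> (Fs 0 - R) <\<^sub>s (Fs 1 - R)"
proof -
  have l2: "{..<(2::nat)} = {0,1}" by auto
  have a: "(\<forall>i<(2::nat). P i) \<longleftrightarrow> P 0 \<and> P 1" for P by (auto simp: less_2_cases_iff)
  have b: "(\<forall>i. Suc i < (2::nat) \<longrightarrow> P i) \<longleftrightarrow> P 0" for P by auto
  show ?thesis unfolding decomposition_def a b l2 by auto
qed


lemma dec_iseg: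
  fixes E R :: "'a::linorder set" and Fs :: "nat \<Rightarrow> 'a set"
  assumes "E = Fs 0 \<union> Fs 1" "Fs 0 \<inter> Fs 1 = R" "R <\<^sub>s (Fs 0 - R)" "(Fs 0 - R) <\<^sub>s (Fs 1 - R)"
    "finite (Fs 0)" "card R < card (Fs 0)"
  shows "R \<sqsubseteq> E" "Fs 0 \<sqsubseteq> E" "Fs 1 = R \<union> (E - Fs 0)"
proof -
  have "R \<subseteq> Fs 0" using assms(2) by auto
  then have "R \<subset> Fs 0" using assms(6) by auto
  then obtain z where z: "z \<in> Fs 0 - R" by auto
  show "R \<sqsubseteq> E" unfolding initial_sub_def
  proof safe
    show "a \<in> E" if "a \<in> R" for a using that assms(1,2) by auto
  next
    fix b a assume b: "b \<in> E" and a: "a \<in> R" and ba: "b < a"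
    show "b \<in> R"
    proof (rule ccontr)
      assume nb: "b \<notin> R"
      then have "b \<in> Fs 0 - R \<or> b \<in> Fs 1 - R" using b assms(1) by auto
      moreover have "a < b" if "b \<in> Fs 0 - R" using that a assms(3) unfolding set_less_def by auto
      moreover have "a < b" if "b \<in> Fs 1 - R"
      proof -
        have "a < z" using a z assms(3) unfolding set_less_def by auto
        also have "z < b" using z that assms(4) unfolding set_less_def by auto
        finally show ?thesis .
      qed
      ultimately show False using ba by auto
    qed
  qed
  show "Fs 0 \<sqsubseteq> E" unfolding initial_sub_def
  proof safe
    show "a \<in> E" if "a \<in> Fs 0" for a using that assms(1) by auto
  next
    fix b a assume b: "b \<in> E" and a: "a \<in> Fs 0" and ba: "b < a"
    show "b \<in> Fs 0"
    proof (rule ccontr)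
      assume nb: "b \<notin> Fs 0"
      then have b1: "b \<in> Fs 1 - R" using b assms(1,2) by auto
      have "a < b"
      proof (cases "a \<in> R")
        case True
        have "a < z" using True z assms(3) unfolding set_less_def by auto
        also have "z < b" using z b1 assms(4) unfolding set_less_def by auto
        finally show ?thesis .
      next
        case False
        then show ?thesis using a b1 assms(4) unfolding set_less_def by auto
      qed
      then show False using ba by auto
    qed
  qed
  show "Fs 1 = R \<union> (E - Fs 0)" using assms(1,2) by auto
qed

locale cs2 =
  fixes F :: "'a::linorder set set" and m r :: "nat \<Rightarrow> nat"
  assumes cs: "construction_scheme F m (\<lambda>_. 2) r"
    and mgt: "\<And>k. m k > r (Suc k)"
    and mrec: "\<And>k. m (Suc k) = r (Suc k) + (m k - r (Suc k)) * 2"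
    and inf_univ: "infinite (UNIV :: 'a set)"
begin

lemma csu: "(\<forall>A\<in>F. finite A) \<and>
     (\<forall>A. finite A \<longrightarrow> (\<exists>E\<in>F. A \<subseteq> E)) \<and>
     (\<forall>k. \<forall>E\<in>level F k. card E = m k) \<and>
     (\<forall>k. \<forall>E\<in>level F k. \<forall>E'\<in>level F k. E \<inter> E' \<sqsubseteq> E \<and> E \<inter> E' \<sqsubseteq> E') \<and>
     (\<forall>k. \<forall>E\<in>level F (Suc k).
        \<exists>Fs. (\<exists>R. decomposition F k 2 (r (Suc k)) E Fs R) \<and>
          (\<forall>Gs. (\<exists>R. decomposition F k 2 (r (Suc k)) E Gs R) \<longrightarrow>
                (\<forall>i<2. Gs i = Fs i)))"
  using cs unfolding construction_scheme_def by simp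

lemma fin: "A \<in> F \<Longrightarrow> finite A" using csu by simp
lemma cover: "finite A \<Longrightarrow> \<exists>E\<in>F. A \<subseteq> E" using csu by simp
lemma card_lvl: "E \<in> level F k \<Longrightarrow> card E = m k" using csu by simp
lemma isub: "E \<in> level F k \<Longrightarrow> E' \<in> level F k \<Longrightarrow> E \<inter> E' \<sqsubseteq> E \<and> E \<inter> E' \<sqsubseteq> E'"
  using csu by simp
lemma lvl_F: "E \<in> level F k \<Longrightarrow> E \<in> F" unfolding level_def by simp
lemma lvl_fin: "E \<in> level F k \<Longrightarrow> finite E" using fin lvl_F by blast
lemma in_lvl: "E \<in> F \<Longrightarrow> E \<in> level F (rank_in F E)" unfolding level_def by simp

lemma dec:
  assumes "E \<in> level F (Suc k)"
  obtains Fs :: "nat \<Rightarrow> 'a set" and R where "Fs 0 \<in> level F k" "Fs 1 \<in> level F k" "E = Fs 0 \<union> Fs 1" "Fs 0 \<inter> Fs 1 = R"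
    "card R = r (Suc k)" "R <\<^sub>s (Fs 0 - R)" "(Fs 0 - R) <\<^sub>s (Fs 1 - R)"
proof -
  note c5 = csu[THEN conjunct2, THEN conjunct2, THEN conjunct2, THEN conjunct2, rule_format, OF assms]
  from c5 obtain Fs R where "decomposition F k 2 (r (Suc k)) E Fs R" by (elim exE conjE)
  then show ?thesis unfolding dec2 by (intro that[of Fs R]) simp_all
qed

lemma dec3:
  assumes "E \<in> level F (Suc k)"
  shows "\<exists>Fs :: nat \<Rightarrow> 'a set. Fs 0 \<in> level F k \<and> Fs 1 \<in> level F k \<and> E = Fs 0 \<union> Fs 1"
proof -
  obtain Fs :: "nat \<Rightarrow> 'a set" and R where "Fs 0 \<in> level F k" "Fs 1 \<in> level F k" "E = Fs 0 \<union> Fs 1"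
    by (rule dec[OF assms])
  then show ?thesis by blast
qed

lemma m_mono: "m k < m (Suc k)"
  using mgt[of k] mrec[of k] by simp

lemma m_le: "j \<le> k \<Longrightarrow> m j \<le> m k"
  by (rule lift_Suc_mono_le[of m]) (use m_mono less_imp_le in blast)

lemma descend:
  "E \<in> level F j \<Longrightarrow> x \<in> E \<Longrightarrow> k \<le> j \<Longrightarrow> \<exists>G\<in>level F k. x \<in> G \<and> G \<subseteq> E"
proof (induction j arbitrary: E)
  case 0
  then show ?case by auto
next
  case (Suc j)
  show ?case
  proof (cases "k = Suc j")
    case True
    then show ?thesis using Suc.prems by auto
  next
    case False
    then have kj: "k \<le> j" using Suc.prems(3) by simp
    obtain Fs :: "nat \<Rightarrow> 'a set" where d: "Fs 0 \<in> level F j" "Fs 1 \<in> level F j" "E = Fs 0 \<union> Fs 1"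
      using dec3[OF Suc.prems(1)] by blast
    then have "x \<in> Fs 0 \<or> x \<in> Fs 1" using Suc.prems(2) by auto
    then show ?thesis using Suc.IH[OF d(1) _ kj] Suc.IH[OF d(2) _ kj] d(3) by blast
  qed
qed

lemma exists_lvl: "\<exists>G\<in>level F k. x \<in> G"
proof -
  obtain A :: "'a set" where A: "finite A" "card A = Suc (m k)"
    using infinite_arbitrarily_large[OF inf_univ] by blast
  have "finite (insert x A)" using A by auto
  then obtain E where E: "E \<in> F" "insert x A \<subseteq> E" using cover by blast
  define j where "j = rank_in F E"
  have Ej: "E \<in> level F j" using in_lvl[OF E(1)] j_def by simp
  have AE: "A \<subseteq> E" and xE: "x \<in> E" using E by auto
  have "card A \<le> card E" using card_mono[OF fin[OF E(1)] AE] .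
  then have lt: "Suc (m k) \<le> m j" using card_lvl[OF Ej] A(2) by simp
  have kj: "k \<le> j"
  proof (rule ccontr)
    assume "\<not> k \<le> j"
    then have "m j \<le> m k" using m_le[of j k] by simp
    then show False using lt by simp
  qed
  obtain G where "G \<in> level F k" "x \<in> G" using descend[OF Ej xE kj] by blast
  then show ?thesis by blast
qed

lemma lvl_inter:
  "E \<in> level F k \<Longrightarrow> G \<in> level F l \<Longrightarrow> l \<le> k \<Longrightarrow> E \<inter> G \<sqsubseteq> G"
proof (induction k arbitrary: E)
  case 0
  then show ?case using isub by auto
next
  case (Suc k)
  show ?case
  proof (cases "l = Suc k")
    case True
    then show ?thesis using Suc.prems isub by auto
  next
    case False
    then have lk: "l \<le> k" using Suc.prems(3) by simp
    obtain Fs :: "nat \<Rightarrow> 'a set" where d: "Fs 0 \<in> level F k" "Fs 1 \<in> level F k" "E = Fs 0 \<union> Fs 1"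
      using dec3[OF Suc.prems(1)] by blast
    have "(Fs 0 \<inter> G) \<union> (Fs 1 \<inter> G) \<sqsubseteq> G"
      by (rule iseg_union) (use Suc.IH[OF d(1) Suc.prems(2) lk] Suc.IH[OF d(2) Suc.prems(2) lk] in auto)
    then show ?thesis using d(3) by (simp add: Int_Un_distrib2)
  qed
qed

lemma below_eq:
  assumes "G \<in> level F k" "G' \<in> level F k" "x \<in> G" "x \<in> G'"
  shows "{y\<in>G. y < x} = {y\<in>G'. y < x}"
  using isub[OF assms(1,2)] assms(3,4) unfolding initial_sub_def by blast

definition pos :: "nat \<Rightarrow> 'a \<Rightarrow> nat" where
  "pos k x = card {y \<in> (SOME G. G \<in> level F k \<and> x \<in> G). y < x}"

lemma pos_eq: "G \<in> level F k \<Longrightarrow> x \<in> G \<Longrightarrow> pos k x = card {y\<in>G. y < x}"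
proof -
  assume a: "G \<in> level F k" "x \<in> G"
  let ?G = "SOME G. G \<in> level F k \<and> x \<in> G"
  have "?G \<in> level F k \<and> x \<in> ?G" by (rule someI_ex) (use exists_lvl in blast)
  then show ?thesis unfolding pos_def using below_eq[OF _ a(1) _ a(2)] by auto
qed

lemma pos_lt:
  assumes "x < y" "x \<in> G" "y \<in> G" "G \<in> level F j" "j \<le> k"
  shows "pos k x < pos k y"
proof -
  obtain G' where G': "G' \<in> level F k" "y \<in> G'" using exists_lvl by blast
  have "G' \<inter> G \<sqsubseteq> G" using lvl_inter[OF G'(1) assms(4,5)] .
  then have xG': "x \<in> G'" using assms G' unfolding initial_sub_def by blast
  have "{z\<in>G'. z < x} \<subset> {z\<in>G'. z < y}" using xG' assms(1) by auto
  then have "card {z\<in>G'. z < x} < card {z\<in>G'. z < y}"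
    by (rule psubset_card_mono[rotated]) (use lvl_fin[OF G'(1)] in auto)
  then show ?thesis using pos_eq[OF G'(1) xG'] pos_eq[OF G'] by simp
qed


lemma dec_iseg_lvl:
  assumes "H \<in> level F (Suc j)"
  obtains Fs :: "nat \<Rightarrow> 'a set" and R where "Fs 0 \<in> level F j" "Fs 1 \<in> level F j" "H = Fs 0 \<union> Fs 1"
    "card R = r (Suc j)" "R \<sqsubseteq> H" "Fs 0 \<sqsubseteq> H" "Fs 1 = R \<union> (H - Fs 0)"
proof -
  obtain Fs :: "nat \<Rightarrow> 'a set" and R where d: "Fs 0 \<in> level F j" "Fs 1 \<in> level F j" "H = Fs 0 \<union> Fs 1" "Fs 0 \<inter> Fs 1 = R"
    "card R = r (Suc j)" "R <\<^sub>s (Fs 0 - R)" "(Fs 0 - R) <\<^sub>s (Fs 1 - R)"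
    by (rule dec[OF assms])
  have "card R < card (Fs 0)" using d(5) card_lvl[OF d(1)] mgt[of j] by simp
  note i = dec_iseg[OF d(3,4,6,7) lvl_fin[OF d(1)] this]
  show ?thesis by (rule that[OF d(1,2,3,5) i])
qed

lemma transfer:
  "H \<in> level F j \<Longrightarrow> H' \<in> level F j \<Longrightarrow> bij_betw \<psi> H H' \<Longrightarrow> strict_mono_on H \<psi> \<Longrightarrow> x \<in> H \<Longrightarrow> k \<le> j
   \<Longrightarrow> \<exists>G\<in>level F k. x \<in> G \<and> G \<subseteq> H \<and> \<psi> ` G \<in> level F k"
proof (induction j arbitrary: H H')
  case 0
  have "\<psi> ` H = H'" using bij_betw_imp_surj_on[OF 0(3)] .
  then show ?case using 0(1,2,5,6) by (intro bexI[of _ H]) auto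
next
  case (Suc j)
  show ?case
  proof (cases "k = Suc j")
    case True
    have "\<psi> ` H = H'" using bij_betw_imp_surj_on[OF Suc.prems(3)] .
    then show ?thesis using Suc.prems(1,2,5) True by (intro bexI[of _ H]) auto
  next
    case False
    then have kj: "k \<le> j" using Suc.prems(6) by simp
    obtain Fs :: "nat \<Rightarrow> 'a set" and R where d: "Fs 0 \<in> level F j" "Fs 1 \<in> level F j" "H = Fs 0 \<union> Fs 1"
      "card R = r (Suc j)" "R \<sqsubseteq> H" "Fs 0 \<sqsubseteq> H" "Fs 1 = R \<union> (H - Fs 0)"
      by (rule dec_iseg_lvl[OF Suc.prems(1)])
    obtain Fs' :: "nat \<Rightarrow> 'a set" and R' where d': "Fs' 0 \<in> level F j" "Fs' 1 \<in> level F j" "H' = Fs' 0 \<union> Fs' 1"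
      "card R' = r (Suc j)" "R' \<sqsubseteq> H'" "Fs' 0 \<sqsubseteq> H'" "Fs' 1 = R' \<union> (H' - Fs' 0)"
      by (rule dec_iseg_lvl[OF Suc.prems(2)])
    have inj: "inj_on \<psi> H" using bij_betw_imp_inj_on[OF Suc.prems(3)] .
    have img: "\<psi> ` H = H'" using bij_betw_imp_surj_on[OF Suc.prems(3)] .
    have finH': "finite H'" using lvl_fin[OF Suc.prems(2)] .
    have RH: "R \<subseteq> H" and F0H: "Fs 0 \<subseteq> H" using d(5,6) unfolding initial_sub_def by auto
    have e0: "\<psi> ` Fs 0 = Fs' 0"
    proof (rule iseg_unique[OF _ d'(6) finH'])
      show "\<psi> ` Fs 0 \<sqsubseteq> H'" unfolding img[symmetric] by (rule iseg_image[OF d(6) Suc.prems(4)])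
      have "card (\<psi> ` Fs 0) = card (Fs 0)" by (rule card_image[OF inj_on_subset[OF inj F0H]])
      then show "card (\<psi> ` Fs 0) = card (Fs' 0)" unfolding card_lvl[OF d(1)] card_lvl[OF d'(1)] .
    qed
    have eR: "\<psi> ` R = R'"
    proof (rule iseg_unique[OF _ d'(5) finH'])
      show "\<psi> ` R \<sqsubseteq> H'" unfolding img[symmetric] by (rule iseg_image[OF d(5) Suc.prems(4)])
      have "card (\<psi> ` R) = card R" by (rule card_image[OF inj_on_subset[OF inj RH]])
      then show "card (\<psi> ` R) = card R'" unfolding d(4) d'(4) .
    qed
    have e1: "\<psi> ` Fs 1 = Fs' 1"
    proof -
      have a1: "\<psi> ` (H - Fs 0) = \<psi> ` H - \<psi> ` Fs 0"
        by (rule inj_on_image_set_diff[OF inj Diff_subset F0H])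
      have a2: "\<psi> ` Fs 1 = \<psi> ` R \<union> \<psi> ` (H - Fs 0)"
        by (subst d(7)) (rule image_Un)
      show ?thesis by (simp only: a2 a1 e0 eR img d'(7))
    qed
    have s0: "Fs 0 \<subseteq> H" and s1: "Fs 1 \<subseteq> H" using d(3) by auto
    have b0: "bij_betw \<psi> (Fs 0) (Fs' 0)" unfolding bij_betw_def using e0 inj_on_subset[OF inj s0] by blast
    have b1: "bij_betw \<psi> (Fs 1) (Fs' 1)" unfolding bij_betw_def using e1 inj_on_subset[OF inj s1] by blast
    have m0: "strict_mono_on (Fs 0) \<psi>" using monotone_on_subset[OF Suc.prems(4) s0] .
    have m1: "strict_mono_on (Fs 1) \<psi>" using monotone_on_subset[OF Suc.prems(4) s1] .
    have "x \<in> Fs 0 \<or> x \<in> Fs 1" using Suc.prems(5) d(3) by auto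
    then show ?thesis
    proof
      assume x0: "x \<in> Fs 0"
      obtain G where "G\<in>level F k" "x \<in> G" "G \<subseteq> Fs 0" "\<psi> ` G \<in> level F k"
        using Suc.IH[OF d(1) d'(1) b0 m0 x0 kj] by blast
      then show ?thesis using s0 by blast
    next
      assume x1: "x \<in> Fs 1"
      obtain G where "G\<in>level F k" "x \<in> G" "G \<subseteq> Fs 1" "\<psi> ` G \<in> level F k"
        using Suc.IH[OF d(2) d'(2) b1 m1 x1 kj] by blast
      then show ?thesis using s1 by blast
    qed
  qed
qed

lemma pos_transfer:
  assumes "H \<in> level F j" "H' \<in> level F j" "bij_betw \<psi> H H'" "strict_mono_on H \<psi>" "x \<in> H" "k \<le> j"
  shows "pos k (\<psi> x) = pos k x"
proof -
  obtain G where G: "G\<in>level F k" "x \<in> G" "G \<subseteq> H" "\<psi> ` G \<in> level F k"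
    using transfer[OF assms] by blast
  have inj: "inj_on \<psi> G" using inj_on_subset[OF bij_betw_imp_inj_on[OF assms(3)] G(3)] .
  have eq: "{y'\<in>\<psi> ` G. y' < \<psi> x} = \<psi> ` {y\<in>G. y < x}"
  proof safe
    fix y assume y: "y \<in> G" "\<psi> y < \<psi> x"
    have "y < x"
    proof (rule ccontr)
      assume "\<not> y < x"
      then have "x < y \<or> x = y" by auto
      then show False using strict_mono_onD[OF assms(4), of x y] y G(2,3) assms(5) by auto
    qed
    then show "\<psi> y \<in> \<psi> ` {y \<in> G. y < x}" using y by auto
  next
    fix y assume y: "y \<in> G" "y < x"
    then show "\<psi> y < \<psi> x" using strict_mono_onD[OF assms(4), of y x] G(2,3) by auto
  next
    fix y assume "y \<in> G" "y < x"
    then show "\<psi> y \<in> \<psi> ` G" by auto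
  qed
  have "pos k (\<psi> x) = card {y'\<in>\<psi> ` G. y' < \<psi> x}" using pos_eq[OF G(4)] G(2) by auto
  also have "\<dots> = card {y\<in>G. y < x}" unfolding eq by (rule card_image) (use inj in \<open>auto intro: inj_on_subset\<close>)
  also have "\<dots> = pos k x" using pos_eq[OF G(1,2)] by simp
  finally show ?thesis .
qed

definition tw :: "'a \<Rightarrow> nat set" where
  "tw x = prod_encode ` {(k, i). i \<le> pos k x}"

lemma tw_inf: "infinite (tw x)"
proof
  assume "finite (tw x)"
  moreover have "range (\<lambda>k. prod_encode (k, 0)) \<subseteq> tw x" unfolding tw_def by auto
  ultimately have "finite (range (\<lambda>k. prod_encode (k, 0)))" by (rule rev_finite_subset)
  moreover have "inj (\<lambda>k. prod_encode (k, 0))" by (auto simp: inj_def prod_encode_eq)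
  ultimately show False using finite_imageD by fastforce
qed

lemma common: "\<exists>j. \<exists>G\<in>level F j. x \<in> G \<and> y \<in> G"
proof -
  obtain E where "E \<in> F" "{x, y} \<subseteq> E" using cover[of "{x,y}"] by auto
  then show ?thesis using in_lvl by blast
qed

lemma tw_aps: assumes "x < y" shows "almost_psubset (tw x) (tw y)"
proof -
  obtain j G where G: "G \<in> level F j" "x \<in> G" "y \<in> G" using common by blast
  have lt: "pos k x < pos k y" if "j \<le> k" for k using pos_lt[OF assms G(2,3,1) that] .
  have "tw x - tw y \<subseteq> prod_encode ` (SIGMA k:{..<j}. {..pos k x})"
  proof
    fix z assume z: "z \<in> tw x - tw y"
    then obtain k i where ki: "z = prod_encode (k, i)" "i \<le> pos k x" unfolding tw_def by auto
    have "\<not> i \<le> pos k y" using z ki unfolding tw_def by auto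
    then have "k < j" using lt[of k] ki by (cases "j \<le> k") auto
    then show "z \<in> prod_encode ` (SIGMA k:{..<j}. {..pos k x})" using ki by auto
  qed
  then have f: "finite (tw x - tw y)" by (rule finite_subset) auto
  have "(\<lambda>k. prod_encode (k, pos k y)) ` {j..} \<subseteq> tw y - tw x"
  proof
    fix z assume "z \<in> (\<lambda>k. prod_encode (k, pos k y)) ` {j..}"
    then obtain k where k: "z = prod_encode (k, pos k y)" "j \<le> k" by auto
    have "z \<in> tw y" unfolding tw_def k by auto
    moreover have "z \<notin> tw x"
    proof
      assume "z \<in> tw x"
      then obtain k' i where "prod_encode (k, pos k y) = prod_encode (k', i)" "i \<le> pos k' x"
        unfolding tw_def k by auto
      then have "pos k y \<le> pos k x" by (auto simp: prod_encode_eq)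
      then show False using lt[OF k(2)] by auto
    qed
    ultimately show "z \<in> tw y - tw x" by simp
  qed
  moreover have "infinite ((\<lambda>k. prod_encode (k, pos k y)) ` {j..})"
  proof
    assume "finite ((\<lambda>k. prod_encode (k, pos k y)) ` {j..})"
    moreover have "inj_on (\<lambda>k. prod_encode (k, pos k y)) {j..}" by (auto simp: inj_on_def prod_encode_eq)
    ultimately have "finite {j..}" using finite_imageD by blast
    then show False using infinite_Ici by blast
  qed
  ultimately have "infinite (tw y - tw x)" using finite_subset by blast
  then show ?thesis using f unfolding almost_psubset_def by simp
qed

lemma aps_irrefl: "\<not> almost_psubset A A" unfolding almost_psubset_def by simp
lemma aps_asym: "almost_psubset A B \<Longrightarrow> \<not> almost_psubset B A" unfolding almost_psubset_def by simp

lemma tw_iff: "x < y \<longleftrightarrow> almost_psubset (tw x) (tw y)"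
proof
  assume "almost_psubset (tw x) (tw y)"
  then show "x < y" using tw_aps[of y x] aps_irrefl aps_asym by (cases x y rule: linorder_cases) auto
qed (rule tw_aps)

lemma tw_inj: "inj tw"
proof (rule injI)
  fix x y assume e: "tw x = tw y"
  show "x = y" using tw_aps[of x y] tw_aps[of y x] e aps_irrefl by (cases x y rule: linorder_cases) auto
qed

lemma suslin:
  assumes cap: "n_capturing 2 F (\<lambda>_. 2) r"
  shows "suslin_family (range tw)"
  unfolding suslin_family_def
proof safe
  fix \<A> assume sub: "\<A> \<subseteq> range tw" and unc: "\<not> countable \<A>"
  define A' where "A' = tw -` \<A>"
  have AA: "\<A> = tw ` A'" using sub unfolding A'_def by auto
  have uA: "\<not> countable A'" using unc AA by auto
  define S where "S = (\<lambda>x. {x}) ` A'"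
  have uS: "\<not> countable S"
  proof
    assume "countable S"
    then have "countable A'" unfolding S_def by (rule countable_image_inj_on) (auto simp: inj_on_def)
    then show False using uA by simp
  qed
  have finS: "\<forall>s\<in>S. finite s" unfolding S_def by auto
  obtain C l E where C: "C \<subseteq> S" "card C = 2" and l: "l > 0" and E: "E \<in> level F l"
      and capt: "captures F (\<lambda>_. 2) r l E C"
    using cap finS uS unfolding n_capturing_def by (metis (no_types, lifting) zero_less_iff_neq_zero)
  from capt obtain Fs R c where dc: "decomposition F (l - 1) 2 (r l) E Fs R"
      and cb: "bij_betw c {..<card C} C"
      and ci: "\<forall>i<card C. c i \<subseteq> Fs i \<and> c i - R \<noteq> {} \<and>
             (\<exists>\<phi>. bij_betw \<phi> (Fs 0) (Fs i) \<and> strict_mono_on (Fs 0) \<phi> \<and> \<phi> ` (c 0) = c i)"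
    unfolding captures_def by auto
  have c0: "c 0 \<in> C" and c1: "c 1 \<in> C" using cb C(2) unfolding bij_betw_def by auto
  obtain x where x: "c 0 = {x}" "x \<in> A'" using c0 C(1) unfolding S_def by auto
  obtain y where y: "c 1 = {y}" "y \<in> A'" using c1 C(1) unfolding S_def by auto
  obtain \<phi> where \<phi>: "bij_betw \<phi> (Fs 0) (Fs 1)" "strict_mono_on (Fs 0) \<phi>" "\<phi> ` (c 0) = c 1"
    using ci[rule_format, of 1] C(2) by auto
  have yx: "y = \<phi> x" using \<phi>(3) x y by auto
  have "c 0 \<subseteq> Fs 0 \<and> c 0 - R \<noteq> {}" using ci[rule_format, of 0] C(2) by simp
  then have x0: "x \<in> Fs 0 - R" using x by auto
  have "c 1 \<subseteq> Fs 1 \<and> c 1 - R \<noteq> {}" using ci[rule_format, of 1] C(2) by simp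
  then have y1: "y \<in> Fs 1 - R" using y by auto
  note dd = dc[unfolded dec2]
  have d0: "Fs 0 \<in> level F (l - 1)" and d1: "Fs 1 \<in> level F (l - 1)" using dd by blast+
  have dE: "E = Fs 0 \<union> Fs 1" using dd by blast
  have dl: "(Fs 0 - R) <\<^sub>s (Fs 1 - R)" using dd by blast
  have xy: "x < y" using dl x0 y1 unfolding set_less_def by blast
  have xE: "x \<in> E" and yE: "y \<in> E" using dE x0 y1 by blast+
  have xF: "x \<in> Fs 0" using x0 by blast
  have le: "pos k x \<le> pos k y" for k
  proof (cases "l \<le> k")
    case True
    then show ?thesis using pos_lt[OF xy xE yE E True] by simp
  next
    case False
    then have kl: "k \<le> l - 1" by simp
    show ?thesis using pos_transfer[OF d0 d1 \<phi>(1) \<phi>(2) xF kl] yx by simp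
  qed
  have "tw x \<subseteq> tw y"
  proof
    fix z assume "z \<in> tw x"
    then obtain k i where "z = prod_encode (k, i)" "i \<le> pos k x" unfolding tw_def by blast
    then show "z \<in> tw y" unfolding tw_def using le[of k] by auto
  qed
  moreover have "tw x \<noteq> tw y" using tw_aps[OF xy] aps_irrefl by metis
  moreover have "tw x \<in> \<A>" "tw y \<in> \<A>" using x y unfolding A'_def by auto
  ultimately show "\<exists>A\<in>\<A>. \<exists>B\<in>\<A>. A \<noteq> B \<and> A \<subseteq> B" by blast
qed

end


fun rr :: "nat \<Rightarrow> nat" where
  "rr 0 = 0" | "rr (Suc k) = fst (prod_decode k)"

fun mm :: "nat \<Rightarrow> nat" where
  "mm 0 = 1" | "mm (Suc k) = rr (Suc k) + (mm k - rr (Suc k)) * 2"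

lemma rr_le: "rr (Suc k) \<le> k"
proof -
  obtain a b where ab: "prod_decode k = (a, b)" by (cases "prod_decode k")
  have "a \<le> prod_encode (a, b)" by (rule le_prod_encode_1)
  also have "prod_encode (a, b) = k" using prod_decode_inverse[of k] ab by simp
  finally show ?thesis using ab by simp
qed

lemma mm_gt: "k < mm k"
proof (induction k)
  case 0
  then show ?case by simp
next
  case (Suc k)
  have "rr (Suc k) \<le> k" by (rule rr_le)
  then show ?case using Suc by simp
qed

lemma mm_r: "rr (Suc k) < mm k"
  using rr_le[of k] mm_gt[of k] by simp

lemma rr_inf: "infinite {k. k \<ge> 1 \<and> rr k = x}"
proof
  assume fin: "finite {k. k \<ge> 1 \<and> rr k = x}"
  have "range (\<lambda>y. Suc (prod_encode (x, y))) \<subseteq> {k. k \<ge> 1 \<and> rr k = x}" by auto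
  then have "finite (range (\<lambda>y. Suc (prod_encode (x, y))))" using fin by (rule finite_subset)
  moreover have "inj (\<lambda>y. Suc (prod_encode (x, y)))" by (auto simp: inj_def prod_encode_eq)
  ultimately show False using finite_imageD by fastforce
qed

lemma is_type_mm: "is_type mm (\<lambda>_. 2) rr"
  unfolding is_type_def using rr_inf mm_r by simp

theorem mainTheorem13:
  assumes "omega1_type TYPE('a::wellorder)"
    and "CA TYPE('a) 2"
  shows "\<exists>T :: nat set set. omega1_pretower TYPE('a) T \<and> suslin_family T"
proof -
  from assms(1) have unc: "\<not> countable (UNIV::'a set)" unfolding omega1_type_def by simp
  then have inf: "infinite (UNIV::'a set)" using countable_finite by blast
  have "\<forall>k\<ge>1. (2::nat) \<le> (\<lambda>_. 2) k" by simp
  then obtain F :: "'a set set" where F: "construction_scheme F mm (\<lambda>_. 2) rr" "n_capturing 2 F (\<lambda>_. 2) rr"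
    using assms(2)[unfolded CA_def, rule_format, OF is_type_mm] by blast
  interpret cs2 F mm rr
  proof
    show "construction_scheme F mm (\<lambda>_. 2) rr" by (rule F(1))
    show "rr (Suc k) < mm k" for k by (rule mm_r)
    show "mm (Suc k) = rr (Suc k) + (mm k - rr (Suc k)) * 2" for k by simp
    show "infinite (UNIV :: 'a set)" by (rule inf)
  qed
  have "omega1_pretower TYPE('a) (range tw)"
    unfolding omega1_pretower_def
  proof (intro conjI ballI exI[of _ tw])
    show "infinite A" if "A \<in> range tw" for A using that tw_inf by auto
    show "bij_betw tw UNIV (range tw)" using tw_inj by (simp add: bij_betw_def)
    show "\<forall>x y. (x < y) = almost_psubset (tw x) (tw y)" using tw_iff by blast
  qed
  moreover have "suslin_family (range tw)" by (rule suslin[OF F(2)])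
  ultimately show ?thesis by blast
qed

end
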